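(* Let $p\ge 2$ and let $T$ be a tetrahedron obtained as the image of the reference tetrahedron under a non-degenerate map. Then the collection of matrix-valued functions on $T$ consisting of a basis of $[\mathcal{N}_{II}^1(T)]^3=[\mathit{P}^1(T)]^{3\times3}$ together with all of the following functions is linearly independent: (i) (edge functions) for each edge $j\in\mathcal{J}$ and each $\varphi$ in a basis of $\mathcal{E}^p_j(T)$: $\varphi\,\mathbf{d}_1\otimes\mathbf{t}$ and $\varphi\,\mathbf{d}_2\otimes\mathbf{t}$, with $\mathbf{t},\mathbf{d}_1,\mathbf{d}_2$ the vectors of edge $j$; (ii) (edge-face functions) for each face $k\in\mathcal{K}$ with normal $\mathbf{n}$, each edge $j\in\mathcal{J}_k$ and each $\varphi$ in a basis of $\mathcal{E}^p_j(T)$: $\varphi\,\mathbf{t}\otimes\mathbf{k}$, $\varphi\,\mathbf{m}\otimes\mathbf{k}$, $\varphi\,\mathbf{n}\otimes\mathbf{k}$, where $\mathbf{t}$ is the tangent of edge $j$, $\mathbf{k}$ is the edge-face vector of edge $j$ with $\mathbf{n}\times\mathbf{k}\neq0$, and $\mathbf{m}=\mathbf{Q}\mathbf{k}$ with $\mathbf{Q}=\|\mathbf{n}\|^2\mathbb{1}-\mathbf{n}\otimes\mathbf{n}$; (iii) (face functions) for each face $k\in\mathcal{K}$ with normal $\mathbf{n}$ and each $\varphi$ in a basis of $\mathcal{F}^p_k(T)$, with $j=\min\mathcal{J}_k$, $\mathbf{t}$ the tangent of edge $j$ and $\mathbf{m}=\mathbf{Q}\mathbf{k}$ as in (ii) for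 this edge $j$: $\varphi\,\mathbf{t}\otimes\mathbf{m}$, $\varphi\,\mathbf{m}\otimes\mathbf{t}$, $\varphi(\mathbf{t}\otimes\mathbf{t}-\mathbf{m}\otimes\mathbf{m})$, $\varphi\,\mathbf{n}\otimes\mathbf{t}$, $\varphi\,\mathbf{n}\otimes\mathbf{m}$; (iv) (cell functions) $\varphi\,\mathbb{1}$ for $\varphi$ in a basis of $\bigoplus_{j\in\mathcal{J}}\mathcal{E}^{p+1}_j(T)\oplus\bigoplus_{k\in\mathcal{K}}\mathcal{F}^{p+1}_k(T)\oplus\mathcal{C}^{p+1}(T)$; for each face $k$ and $\varphi$ in a basis of $\mathcal{F}^p_k(T)$, with $\mathbf{t},\mathbf{m},\mathbf{n}$ as in (iii): $\varphi\,\mathbf{t}\otimes\mathbf{n}$, $\varphi\,\mathbf{m}\otimes\mathbf{n}$, $\varphi\,\mathbf{n}\otimes\mathbf{n}$; and $\varphi\,\mathbf{T}$ for $\varphi$ in a basis of $\mathcal{C}^p(T)$ and $\mathbf{T}$ in a basis of $\mathfrak{sl}(3)$ (trace-free $3\times3$ matrices).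
   Context: Reference tetrahedron $\Omega=\{(\xi,\eta,\zeta)\in[0,1]^3:\xi+\eta+\zeta\le1\}$ with barycentric coordinates $\lambda_1=1-\xi-\eta-\zeta$, $\lambda_2=\zeta$, $\lambda_3=\eta$, $\lambda_4=\xi$ (vertex $v_i$ is where $\lambda_i=1$). The physical element is $T=\mathbf{x}(\Omega)$ with $\mathbf{J}=\mathrm{D}\mathbf{x}$ invertible. Edges are indexed by $\mathcal{J}=\{(1,2),(1,3),(1,4),(2,3),(2,4),(3,4)\}$, faces by $\mathcal{K}=\{(1,2,3),(1,2,4),(1,3,4),(2,3,4)\}$; $\mathcal{J}_k$ is the set of the three edges of face $k$ and $\min\mathcal{J}_k$ its lexicographically smallest element. Scalar polytopal spaces: for each degree $q\ge1$ a basis of $\mathit{P}^q(T)$ is split into vertex functions ($\lambda_1,\dots,\lambda_4$), edge spaces $\mathcal{E}^q_j(T)$ of dimension $q-1$ (functions of degree $2,\dots,q$ associated to edge $j$, vanishing on all other edges), face spaces $\mathcal{F}^q_k(T)$ of dimension $(q-2)(q-1)/2$ (vanishing on all other faces), and a cell space $\mathcal{C}^q(T)$ of dimension $(q-3)(q-2)(q-1)/6$ (vanishing on $\partial T$); the union of these bases is a basis of $\mathit{P}^q(T)$. Edge tangents: reference templates $\boldsymbol{\tau}_{12}=\mathbf{e}_3$, $\boldsymbol{\tau}_{13}=\mathbf{e}_2$, $\boldsymbol{\tau}_{14}=\mathbf{e}_1$, $\boldsymbol{\tau}_{23}=\mathbf{e}_2-\mathbf{e}_3$, $\boldsymbol{\tau}_{24}=\mathbf{e}_1-\mathbf{e}_3$,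 $\boldsymbol{\tau}_{34}=\mathbf{e}_1-\mathbf{e}_2$, mapped by $\mathbf{t}=\mathbf{J}\boldsymbol{\tau}$. Edge-face vectors: reference pairs $(1,2):\{-\mathbf{e}_2,-\mathbf{e}_1\}$, $(1,3):\{\mathbf{e}_3,-\mathbf{e}_1\}$, $(1,4):\{\mathbf{e}_3,\mathbf{e}_2\}$, $(2,3):\{\mathbf{e}_1+\mathbf{e}_2+\mathbf{e}_3,-\mathbf{e}_1\}$, $(2,4):\{\mathbf{e}_1+\mathbf{e}_2+\mathbf{e}_3,\mathbf{e}_2\}$, $(3,4):\{\mathbf{e}_1+\mathbf{e}_2+\mathbf{e}_3,-\mathbf{e}_3\}$, mapped by $\mathbf{k}=\mathbf{J}^{-T}\boldsymbol{\kappa}$. Face normals: reference $\boldsymbol{\nu}_{123}=-\mathbf{e}_1$, $\boldsymbol{\nu}_{124}=\mathbf{e}_2$, $\boldsymbol{\nu}_{134}=-\mathbf{e}_3$, $\boldsymbol{\nu}_{234}=-\mathbf{e}_1-\mathbf{e}_2-\mathbf{e}_3$, mapped by $\mathbf{n}=(\det\mathbf{J})\mathbf{J}^{-T}\boldsymbol{\nu}$. For an edge with tangent $\mathbf{t}=(t_1,t_2,t_3)$, $\mathbf{d}_2=\big(\operatorname{sgn}_*(t_1)|t_3|,\ \operatorname{sgn}_*(t_2)|t_3|,\ -\operatorname{sgn}_*(t_3)|t_1|-\operatorname{sgn}_*(t_3)|t_2|\big)^T$ where $\operatorname{sgn}_*(x)=1$ for $x\ge0$ and $-1$ for $x<0$,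 and $\mathbf{d}_1=\mathbf{d}_2\times\mathbf{t}$. $\mathbb{1}$ is the identity matrix. $[\mathcal{N}_{II}^1(T)]^3$ is the space of $3\times3$ matrix fields with all rows in $[\mathit{P}^1(T)]^3$, i.e. $[\mathit{P}^1(T)]^{3\times3}$. *)

theory Defs
  imports "HOL-Analysis.Analysis"
begin

type_synonym vec3 = "real^3"
type_synonym mat3 = "real^3^3"

text \<open>Reference tetrahedron; coordinates (xi,eta,zeta) are components 1,2,3.\<close>
definition ref_tet :: "vec3 set" where
  "ref_tet = {\<xi>. 0 \<le> \<xi>$1 \<and> 0 \<le> \<xi>$2 \<and> 0 \<le> \<xi>$3 \<and> \<xi>$1 + \<xi>$2 + \<xi>$3 \<le> 1}"

text \<open>Physical element T = x(Omega) for the affine map x(xi) = A xi + b, J = Dx = A.\<close>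
definition phys_tet :: "mat3 \<Rightarrow> vec3 \<Rightarrow> vec3 set" where
  "phys_tet A b = (\<lambda>\<xi>. A *v \<xi> + b) ` ref_tet"

definition refc :: "mat3 \<Rightarrow> vec3 \<Rightarrow> vec3 \<Rightarrow> vec3" where
  "refc A b x = matrix_inv A *v (x - b)"

definition lam :: "mat3 \<Rightarrow> vec3 \<Rightarrow> nat \<Rightarrow> vec3 \<Rightarrow> real" where
  "lam A b i x = (let \<xi> = refc A b x in
      if i = 1 then 1 - \<xi>$1 - \<xi>$2 - \<xi>$3
      else if i = 2 then \<xi>$3
      else if i = 3 then \<xi>$2
      else if i = 4 then \<xi>$1 else 0)"

definition edgesJ :: "(nat \<times> nat) list" where
  "edgesJ = [(1,2),(1,3),(1,4),(2,3),(2,4),(3,4)]"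

definition facesK :: "(nat \<times> nat \<times> nat) list" where
  "facesK = [(1,2,3),(1,2,4),(1,3,4),(2,3,4)]"

fun face_edges :: "nat \<times> nat \<times> nat \<Rightarrow> (nat \<times> nat) list" where
  "face_edges (a,b,c) = [(a,b),(a,c),(b,c)]"

definition lex_le :: "nat \<times> nat \<Rightarrow> nat \<times> nat \<Rightarrow> bool" where
  "lex_le e e' \<longleftrightarrow> fst e < fst e' \<or> (fst e = fst e' \<and> snd e \<le> snd e')"

definition min_edge :: "nat \<times> nat \<times> nat \<Rightarrow> nat \<times> nat" where
  "min_edge k = (THE e. e \<in> set (face_edges k) \<and> (\<forall>e'\<in>set (face_edges k). lex_le e e'))"

definition edge_set :: "mat3 \<Rightarrow> vec3 \<Rightarrow> nat \<times> nat \<Rightarrow> vec3 set" where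
  "edge_set A b e = {x \<in> phys_tet A b. \<forall>i\<in>{1..4} - {fst e, snd e}. lam A b i x = 0}"

definition face_set :: "mat3 \<Rightarrow> vec3 \<Rightarrow> nat \<times> nat \<times> nat \<Rightarrow> vec3 set" where
  "face_set A b k = {x \<in> phys_tet A b.
      \<forall>i\<in>{1..4} - {fst k, fst (snd k), snd (snd k)}. lam A b i x = 0}"

definition bdry :: "mat3 \<Rightarrow> vec3 \<Rightarrow> vec3 set" where
  "bdry A b = (\<Union>k\<in>set facesK. face_set A b k)"

definition Poly3 :: "nat \<Rightarrow> (vec3 \<Rightarrow> real) set" where
  "Poly3 q = {f. \<exists>c :: nat \<Rightarrow> nat \<Rightarrow> nat \<Rightarrow> real. \<forall>x.
      f x = (\<Sum>(i,j,l) \<in> {(i,j,l). i + j + l \<le> q}. c i j l * x$1 ^ i * x$2 ^ j * x$3 ^ l)}"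

definition lin_indep_on :: "'a set \<Rightarrow> ('a \<Rightarrow> 'b::real_vector) list \<Rightarrow> bool" where
  "lin_indep_on X L \<longleftrightarrow> (\<forall>c :: nat \<Rightarrow> real.
      (\<forall>x\<in>X. (\<Sum>i<length L. c i *\<^sub>R (L ! i) x) = 0) \<longrightarrow> (\<forall>i<length L. c i = 0))"

definition spans_on :: "'a set \<Rightarrow> ('a \<Rightarrow> 'b::real_vector) list \<Rightarrow> ('a \<Rightarrow> 'b) set \<Rightarrow> bool" where
  "spans_on X L V \<longleftrightarrow> (\<forall>g\<in>V. \<exists>c :: nat \<Rightarrow> real.
      \<forall>x\<in>X. g x = (\<Sum>i<length L. c i *\<^sub>R (L ! i) x))"

definition basis_on :: "'a set \<Rightarrow> ('a \<Rightarrow> 'b::real_vector) list \<Rightarrow> ('a \<Rightarrow> 'b) set \<Rightarrow> bool" where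
  "basis_on X L V \<longleftrightarrow> set L \<subseteq> V \<and> lin_indep_on X L \<and> spans_on X L V"

definition MatPoly1 :: "(vec3 \<Rightarrow> mat3) set" where
  "MatPoly1 = {F. \<forall>r s. (\<lambda>x. F x $ r $ s) \<in> Poly3 1}"

definition sl3 :: "mat3 set" where
  "sl3 = {M. trace M = 0}"

text \<open>eb q j i (i < q-1): basis of E^q_j(T); fb q k i (i < (q-2)(q-1)/2): basis of F^q_k(T);
  cb q i (i < (q-3)(q-2)(q-1)/6): basis of C^q(T).\<close>
definition E_list :: "(nat \<Rightarrow> nat \<times> nat \<Rightarrow> nat \<Rightarrow> vec3 \<Rightarrow> real) \<Rightarrow> nat \<Rightarrow> nat \<times> nat
    \<Rightarrow> (vec3 \<Rightarrow> real) list" where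
  "E_list eb q j = map (eb q j) [0..<q - 1]"

definition F_list :: "(nat \<Rightarrow> nat \<times> nat \<times> nat \<Rightarrow> nat \<Rightarrow> vec3 \<Rightarrow> real) \<Rightarrow> nat \<Rightarrow> nat \<times> nat \<times> nat
    \<Rightarrow> (vec3 \<Rightarrow> real) list" where
  "F_list fb q k = map (fb q k) [0..<(q - 2) * (q - 1) div 2]"

definition C_list :: "(nat \<Rightarrow> nat \<Rightarrow> vec3 \<Rightarrow> real) \<Rightarrow> nat \<Rightarrow> (vec3 \<Rightarrow> real) list" where
  "C_list cb q = map (cb q) [0..<(q - 3) * (q - 2) * (q - 1) div 6]"

definition full_list :: "mat3 \<Rightarrow> vec3 \<Rightarrow> (nat \<Rightarrow> nat \<times> nat \<Rightarrow> nat \<Rightarrow> vec3 \<Rightarrow> real)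
    \<Rightarrow> (nat \<Rightarrow> nat \<times> nat \<times> nat \<Rightarrow> nat \<Rightarrow> vec3 \<Rightarrow> real) \<Rightarrow> (nat \<Rightarrow> nat \<Rightarrow> vec3 \<Rightarrow> real)
    \<Rightarrow> nat \<Rightarrow> (vec3 \<Rightarrow> real) list" where
  "full_list A b eb fb cb q =
     map (lam A b) [1,2,3,4] @ concat (map (E_list eb q) edgesJ)
     @ concat (map (F_list fb q) facesK) @ C_list cb q"

definition polytopal_spaces :: "mat3 \<Rightarrow> vec3 \<Rightarrow> (nat \<Rightarrow> nat \<times> nat \<Rightarrow> nat \<Rightarrow> vec3 \<Rightarrow> real)
    \<Rightarrow> (nat \<Rightarrow> nat \<times> nat \<times> nat \<Rightarrow> nat \<Rightarrow> vec3 \<Rightarrow> real) \<Rightarrow> (nat \<Rightarrow> nat \<Rightarrow> vec3 \<Rightarrow> real) \<Rightarrow> bool" where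
  "polytopal_spaces A b eb fb cb \<longleftrightarrow> (\<forall>q\<ge>1.
     basis_on (phys_tet A b) (full_list A b eb fb cb q) (Poly3 q)
     \<and> (\<forall>j\<in>set edgesJ. \<forall>\<phi>\<in>set (E_list eb q j). \<forall>j'\<in>set edgesJ. j' \<noteq> j \<longrightarrow>
          (\<forall>x\<in>edge_set A b j'. \<phi> x = 0))
     \<and> (\<forall>k\<in>set facesK. \<forall>\<phi>\<in>set (F_list fb q k). \<forall>k'\<in>set facesK. k' \<noteq> k \<longrightarrow>
          (\<forall>x\<in>face_set A b k'. \<phi> x = 0))
     \<and> (\<forall>\<phi>\<in>set (C_list cb q). \<forall>x\<in>bdry A b. \<phi> x = 0))"

definition e1 :: vec3 where "e1 = vector [1,0,0]"
definition e2 :: vec3 where "e2 = vector [0,1,0]"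
definition e3 :: vec3 where "e3 = vector [0,0,1]"

definition tau_ref :: "nat \<times> nat \<Rightarrow> vec3" where
  "tau_ref j = (if j = (1,2) then e3 else if j = (1,3) then e2 else if j = (1,4) then e1
     else if j = (2,3) then e2 - e3 else if j = (2,4) then e1 - e3
     else if j = (3,4) then e1 - e2 else 0)"

definition kappa_ref :: "nat \<times> nat \<Rightarrow> vec3 \<times> vec3" where
  "kappa_ref j = (if j = (1,2) then (- e2, - e1) else if j = (1,3) then (e3, - e1)
     else if j = (1,4) then (e3, e2) else if j = (2,3) then (e1 + e2 + e3, - e1)
     else if j = (2,4) then (e1 + e2 + e3, e2) else if j = (3,4) then (e1 + e2 + e3, - e3)
     else (0, 0))"

definition nu_ref :: "nat \<times> nat \<times> nat \<Rightarrow> vec3" where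
  "nu_ref k = (if k = (1,2,3) then - e1 else if k = (1,2,4) then e2
     else if k = (1,3,4) then - e3 else if k = (2,3,4) then - e1 - e2 - e3 else 0)"

definition tang :: "mat3 \<Rightarrow> nat \<times> nat \<Rightarrow> vec3" where
  "tang J j = J *v tau_ref j"

definition nrm :: "mat3 \<Rightarrow> nat \<times> nat \<times> nat \<Rightarrow> vec3" where
  "nrm J k = det J *\<^sub>R (transpose (matrix_inv J) *v nu_ref k)"

definition kvec :: "mat3 \<Rightarrow> nat \<times> nat \<times> nat \<Rightarrow> nat \<times> nat \<Rightarrow> vec3" where
  "kvec J k j = (let k1 = transpose (matrix_inv J) *v fst (kappa_ref j);
                     k2 = transpose (matrix_inv J) *v snd (kappa_ref j)
                 in if cross3 (nrm J k) k1 \<noteq> 0 then k1 else k2)"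

definition outer :: "vec3 \<Rightarrow> vec3 \<Rightarrow> mat3" where
  "outer u v = (\<chi> i j. u$i * v$j)"

definition mvec :: "mat3 \<Rightarrow> nat \<times> nat \<times> nat \<Rightarrow> nat \<times> nat \<Rightarrow> vec3" where
  "mvec J k j = ((norm (nrm J k))\<^sup>2 *\<^sub>R mat 1 - outer (nrm J k) (nrm J k)) *v kvec J k j"

definition sgn_star :: "real \<Rightarrow> real" where
  "sgn_star x = (if x \<ge> 0 then 1 else -1)"

definition d2vec :: "vec3 \<Rightarrow> vec3" where
  "d2vec t = vector [sgn_star (t$1) * \<bar>t$3\<bar>, sgn_star (t$2) * \<bar>t$3\<bar>,
                     - sgn_star (t$3) * \<bar>t$1\<bar> - sgn_star (t$3) * \<bar>t$2\<bar>]"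

definition d1vec :: "vec3 \<Rightarrow> vec3" where
  "d1vec t = cross3 (d2vec t) t"

definition sm :: "(vec3 \<Rightarrow> real) \<Rightarrow> mat3 \<Rightarrow> vec3 \<Rightarrow> mat3" where
  "sm \<phi> M = (\<lambda>x. \<phi> x *\<^sub>R M)"

definition edge_funs :: "mat3 \<Rightarrow> (nat \<Rightarrow> nat \<times> nat \<Rightarrow> nat \<Rightarrow> vec3 \<Rightarrow> real) \<Rightarrow> nat
    \<Rightarrow> (vec3 \<Rightarrow> mat3) list" where
  "edge_funs J eb p = concat (map (\<lambda>j. let t = tang J j in
      concat (map (\<lambda>\<phi>. [sm \<phi> (outer (d1vec t) t), sm \<phi> (outer (d2vec t) t)]) (E_list eb p j)))
      edgesJ)"

definition edge_face_funs :: "mat3 \<Rightarrow> (nat \<Rightarrow> nat \<times> nat \<Rightarrow> nat \<Rightarrow> vec3 \<Rightarrow> real) \<Rightarrow> nat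
    \<Rightarrow> (vec3 \<Rightarrow> mat3) list" where
  "edge_face_funs J eb p = concat (map (\<lambda>k. concat (map (\<lambda>j.
      let n = nrm J k; t = tang J j; kv = kvec J k j; m = mvec J k j in
      concat (map (\<lambda>\<phi>. [sm \<phi> (outer t kv), sm \<phi> (outer m kv), sm \<phi> (outer n kv)])
        (E_list eb p j))) (face_edges k))) facesK)"

definition face_funs :: "mat3 \<Rightarrow> (nat \<Rightarrow> nat \<times> nat \<times> nat \<Rightarrow> nat \<Rightarrow> vec3 \<Rightarrow> real) \<Rightarrow> nat
    \<Rightarrow> (vec3 \<Rightarrow> mat3) list" where
  "face_funs J fb p = concat (map (\<lambda>k.
      let j = min_edge k; n = nrm J k; t = tang J j; m = mvec J k j in
      concat (map (\<lambda>\<phi>. [sm \<phi> (outer t m), sm \<phi> (outer m t), sm \<phi> (outer t t - outer m m),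
                          sm \<phi> (outer n t), sm \<phi> (outer n m)]) (F_list fb p k))) facesK)"

definition cell_funs :: "mat3 \<Rightarrow> (nat \<Rightarrow> nat \<times> nat \<Rightarrow> nat \<Rightarrow> vec3 \<Rightarrow> real)
    \<Rightarrow> (nat \<Rightarrow> nat \<times> nat \<times> nat \<Rightarrow> nat \<Rightarrow> vec3 \<Rightarrow> real) \<Rightarrow> (nat \<Rightarrow> nat \<Rightarrow> vec3 \<Rightarrow> real)
    \<Rightarrow> mat3 list \<Rightarrow> nat \<Rightarrow> (vec3 \<Rightarrow> mat3) list" where
  "cell_funs J eb fb cb S p =
      map (\<lambda>\<phi>. sm \<phi> (mat 1))
        (concat (map (E_list eb (p + 1)) edgesJ) @ concat (map (F_list fb (p + 1)) facesK)
         @ C_list cb (p + 1))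
    @ concat (map (\<lambda>k.
      let j = min_edge k; n = nrm J k; t = tang J j; m = mvec J k j in
      concat (map (\<lambda>\<phi>. [sm \<phi> (outer t n), sm \<phi> (outer m n), sm \<phi> (outer n n)])
        (F_list fb p k))) facesK)
    @ concat (map (\<lambda>\<phi>. map (sm \<phi>) S) (C_list cb p))"

definition whole_family :: "mat3 \<Rightarrow> (vec3 \<Rightarrow> mat3) list \<Rightarrow> (nat \<Rightarrow> nat \<times> nat \<Rightarrow> nat \<Rightarrow> vec3 \<Rightarrow> real)
    \<Rightarrow> (nat \<Rightarrow> nat \<times> nat \<times> nat \<Rightarrow> nat \<Rightarrow> vec3 \<Rightarrow> real) \<Rightarrow> (nat \<Rightarrow> nat \<Rightarrow> vec3 \<Rightarrow> real)
    \<Rightarrow> mat3 list \<Rightarrow> nat \<Rightarrow> (vec3 \<Rightarrow> mat3) list" where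
  "whole_family J B1 eb fb cb S p =
     B1 @ edge_funs J eb p @ edge_face_funs J eb p @ face_funs J fb p @ cell_funs J eb fb cb S p"

end

theory Submission
  imports Defs "HOL-Combinatorics.List_Permutation"
begin

lemma Poly3_fin: "finite {(i,j,l). i + j + l \<le> (q::nat)}"
proof -
  have "{(i,j,l). i + j + l \<le> q} \<subseteq> {..q} \<times> {..q} \<times> {..q}" by auto
  then show ?thesis by (rule finite_subset) auto
qed

lemma Poly3_add: "f \<in> Poly3 q \<Longrightarrow> g \<in> Poly3 q \<Longrightarrow> (\<lambda>x. f x + g x) \<in> Poly3 q"
proof -
  assume "f \<in> Poly3 q" "g \<in> Poly3 q"
  then obtain c d where c: "\<forall>x. f x = (\<Sum>(i,j,l) \<in> {(i,j,l). i + j + l \<le> q}. c i j l * x$1 ^ i * x$2 ^ j * x$3 ^ l)"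
    and d: "\<forall>x. g x = (\<Sum>(i,j,l) \<in> {(i,j,l). i + j + l \<le> q}. d i j l * x$1 ^ i * x$2 ^ j * x$3 ^ l)"
    unfolding Poly3_def by auto
  show ?thesis unfolding Poly3_def
    apply (rule CollectI, rule exI[of _ "\<lambda>i j l. c i j l + d i j l"])
    by (auto simp: c d sum.distrib[symmetric] split_def algebra_simps intro!: sum.cong)
qed

lemma Poly3_scale: "f \<in> Poly3 q \<Longrightarrow> (\<lambda>x. a * f x) \<in> Poly3 q"
proof -
  assume "f \<in> Poly3 q"
  then obtain c where c: "\<forall>x. f x = (\<Sum>(i,j,l) \<in> {(i,j,l). i + j + l \<le> q}. c i j l * x$1 ^ i * x$2 ^ j * x$3 ^ l)"
    unfolding Poly3_def by auto
  show ?thesis unfolding Poly3_def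
    apply (rule CollectI, rule exI[of _ "\<lambda>i j l. a * c i j l"])
    by (auto simp: c sum_distrib_left split_def algebra_simps intro!: sum.cong)
qed

lemma Poly3_zero: "(\<lambda>x. 0) \<in> Poly3 q"
  unfolding Poly3_def by (rule CollectI, rule exI[of _ "\<lambda>i j l. 0"]) simp

lemma Poly3_sum: "finite I \<Longrightarrow> (\<And>i. i \<in> I \<Longrightarrow> f i \<in> Poly3 q) \<Longrightarrow> (\<lambda>x. \<Sum>i\<in>I. a i * f i x) \<in> Poly3 q"
proof (induction I rule: finite_induct)
  case empty then show ?case by (simp add: Poly3_zero)
next
  case (insert i I)
  have "(\<lambda>x. a i * f i x + (\<Sum>i\<in>I. a i * f i x)) \<in> Poly3 q"
    using insert by (intro Poly3_add Poly3_scale) auto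
  then show ?case using insert by simp
qed

lemma Poly3_mono: "q \<le> q' \<Longrightarrow> Poly3 q \<subseteq> Poly3 q'"
proof
  fix f assume "q \<le> q'" "f \<in> Poly3 q"
  then obtain c where c: "\<forall>x. f x = (\<Sum>(i,j,l) \<in> {(i,j,l). i + j + l \<le> q}. c i j l * x$1 ^ i * x$2 ^ j * x$3 ^ l)"
    unfolding Poly3_def by auto
  let ?d = "\<lambda>i j l. if i + j + l \<le> q then c i j l else 0"
  have dd: "\<forall>x. f x = (\<Sum>(i,j,l) \<in> {(i,j,l). i + j + l \<le> q'}. ?d i j l * x$1 ^ i * x$2 ^ j * x$3 ^ l)"
  proof
    fix x :: vec3
    have "(\<Sum>(i,j,l) \<in> {(i,j,l). i + j + l \<le> q'}. ?d i j l * x$1 ^ i * x$2 ^ j * x$3 ^ l)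
        = (\<Sum>(i,j,l) \<in> {(i,j,l). i + j + l \<le> q}. ?d i j l * x$1 ^ i * x$2 ^ j * x$3 ^ l)"
      using \<open>q \<le> q'\<close> by (intro sum.mono_neutral_right Poly3_fin) (auto split: if_splits)
    also have "\<dots> = (\<Sum>(i,j,l) \<in> {(i,j,l). i + j + l \<le> q}. c i j l * x$1 ^ i * x$2 ^ j * x$3 ^ l)"
      by (intro sum.cong) auto
    finally show "f x = (\<Sum>(i,j,l) \<in> {(i,j,l). i + j + l \<le> q'}. ?d i j l * x$1 ^ i * x$2 ^ j * x$3 ^ l)"
      using c by simp
  qed
  show "f \<in> Poly3 q'" unfolding Poly3_def by (rule CollectI, rule exI[of _ ?d], rule dd)
qed

lemma sum_split_add: "(\<Sum>i<m + (n::nat). g i) = (\<Sum>i<m. g i) + (\<Sum>i<n. (g (m + i)::'a::comm_monoid_add))"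
  by (induction n) (simp_all add: add.assoc)

lemma sum_append_idx:
  "(\<Sum>i<length (xs @ ys). f i ((xs @ ys) ! i)) =
   (\<Sum>i<length xs. f i (xs ! i)) + (\<Sum>i<length ys. (f (length xs + i) (ys ! i) :: 'a::comm_monoid_add))"
  by (simp add: sum_split_add nth_append)

definition off :: "'a list list \<Rightarrow> nat \<Rightarrow> nat" where
  "off Ls a = sum_list (map length (take a Ls))"

lemma sum_concat_idx:
  "(\<Sum>i<length (concat Ls). f i (concat Ls ! i)) =
   (\<Sum>a<length Ls. \<Sum>b<length (Ls!a). (f (off Ls a + b) (Ls ! a ! b) :: 'a::comm_monoid_add))"
proof (induction Ls arbitrary: f)
  case Nil then show ?case by simp
next
  case (Cons L Ls)
  have "(\<Sum>i<length (concat (L # Ls)). f i (concat (L # Ls) ! i)) =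
     (\<Sum>i<length L. f i (L ! i)) + (\<Sum>i<length (concat Ls). f (length L + i) (concat Ls ! i))"
    using sum_append_idx[of f L "concat Ls"] by simp
  also have "\<dots> = (\<Sum>i<length L. f i (L ! i)) + (\<Sum>a<length Ls. \<Sum>b<length (Ls!a). f (length L + off Ls a + b) (Ls ! a ! b))"
    using Cons[of "\<lambda>i. f (length L + i)"] by (simp add: add.assoc)
  also have "\<dots> = (\<Sum>a<length (L # Ls). \<Sum>b<length ((L # Ls)!a). f (off (L # Ls) a + b) ((L # Ls) ! a ! b))"
    by (simp only: length_Cons sum.lessThan_Suc_shift) (simp add: off_def)
  finally show ?case .
qed

lemma concat_idx_cover:
  assumes "\<And>a b. a < length Ls \<Longrightarrow> b < length (Ls!a) \<Longrightarrow> P (off Ls a + b)"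
  and "i < length (concat Ls)"
  shows "P i"
  using assms
proof (induction Ls arbitrary: P i)
  case Nil then show ?case by simp
next
  case (Cons L Ls)
  show ?case
  proof (cases "i < length L")
    case True
    then show ?thesis using Cons.prems(1)[of 0 i] by (simp add: off_def)
  next
    case False
    have "P (length L + (i - length L))"
    proof (rule Cons.IH[of "\<lambda>i. P (length L + i)"])
      show "i - length L < length (concat Ls)" using Cons.prems(2) False by simp
      fix a b assume "a < length Ls" "b < length (Ls ! a)"
      then show "P (length L + (off Ls a + b))"
        using Cons.prems(1)[of "Suc a" b] by (simp add: off_def add.assoc)
    qed
    then show ?thesis using False by simp
  qed
qed

lemma outer_mult: "outer u v *v w = (v \<bullet> w) *\<^sub>R u"
  by (simp add: vec_eq_iff outer_def matrix_vector_mult_def inner_vec_def sum_distrib_left mult.assoc mult.commute mult.left_commute)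

lemma scaleR_mat_mult: "((c::real) *\<^sub>R M) *v (w::vec3) = c *\<^sub>R (M *v w)"
  by (simp add: vec_eq_iff matrix_vector_mult_def sum_distrib_left mult.assoc)

lemma outer_row: "(outer u v) $ r = u $ r *\<^sub>R v"
  by (simp add: vec_eq_iff outer_def)

lemma orth3:
  fixes u v w :: vec3
  assumes "u \<noteq> 0" "v \<noteq> 0" "w \<noteq> 0" "u \<bullet> v = 0" "u \<bullet> w = 0" "v \<bullet> w = 0"
    and "a *\<^sub>R u + b *\<^sub>R v + c *\<^sub>R w = 0"
  shows "a = 0 \<and> b = 0 \<and> c = 0"
proof -
  have vu: "v \<bullet> u = 0" "w \<bullet> u = 0" "w \<bullet> v = 0" using assms by (simp_all add: inner_commute)
  have "u \<bullet> (a *\<^sub>R u + b *\<^sub>R v + c *\<^sub>R w) = 0" "v \<bullet> (a *\<^sub>R u + b *\<^sub>R v + c *\<^sub>R w) = 0"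
     "w \<bullet> (a *\<^sub>R u + b *\<^sub>R v + c *\<^sub>R w) = 0" using assms(7) by simp_all
  then have "a * (u \<bullet> u) = 0" "b * (v \<bullet> v) = 0" "c * (w \<bullet> w) = 0"
    using assms(4-6) vu by (simp_all add: inner_add_right)
  then show ?thesis using assms(1-3) by simp
qed

definition face_frame :: "vec3 \<Rightarrow> vec3 \<Rightarrow> vec3 \<Rightarrow> vec3 \<Rightarrow> bool" where
  "face_frame t kv n m \<longleftrightarrow> t \<noteq> 0 \<and> n \<noteq> 0 \<and> m \<noteq> 0 \<and> t \<bullet> kv = 0 \<and> t \<bullet> n = 0 \<and> m \<bullet> n = 0 \<and> t \<bullet> m = 0"

definition indep2 :: "vec3 \<Rightarrow> vec3 \<Rightarrow> bool" where
  "indep2 k1 k2 \<longleftrightarrow> (\<forall>a b. a *\<^sub>R k1 + b *\<^sub>R k2 = 0 \<longrightarrow> a = 0 \<and> b = 0)"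

lemma list8_sum: "(\<Sum>i<length [a0,a1,a2,a3,a4,a5,a6,a7]. c i *\<^sub>R ([a0,a1,a2,a3,a4,a5,a6,a7] ! i))
   = c 0 *\<^sub>R a0 + c 1 *\<^sub>R a1 + c 2 *\<^sub>R a2 + c 3 *\<^sub>R a3 + c 4 *\<^sub>R a4 + c 5 *\<^sub>R a5 + c 6 *\<^sub>R a6 + c 7 *\<^sub>R (a7::mat3)"
  by (simp add: numeral_eq_Suc sum.lessThan_Suc add.assoc)

lemma all8: "(\<forall>i<length [a0,a1,a2,a3,a4,a5,a6,a7::mat3]. P i) \<longleftrightarrow> P 0 \<and> P 1 \<and> P 2 \<and> P 3 \<and> P 4 \<and> P 5 \<and> P 6 \<and> P 7"
  by (simp add: numeral_eq_Suc less_Suc_eq all_conj_distrib) 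

definition mats_indep :: "mat3 list \<Rightarrow> bool" where
  "mats_indep Ms \<longleftrightarrow> (\<forall>c z. (\<Sum>i<length Ms. c i *\<^sub>R Ms!i) + z *\<^sub>R mat 1 = 0 \<longrightarrow> z = 0 \<and> (\<forall>i<length Ms. c i = 0))"

lemma edge_mats:
  fixes t d1 d2 k1 n1 m1 k2 n2 m2 :: vec3
  assumes "d1 \<noteq> 0" "d2 \<noteq> 0" "d1 \<bullet> d2 = 0" "d1 \<bullet> t = 0" "d2 \<bullet> t = 0"
    and f1: "face_frame t k1 n1 m1" and f2: "face_frame t k2 n2 m2" and i2: "indep2 k1 k2"
  shows "mats_indep [outer d1 t, outer d2 t, outer t k1, outer m1 k1, outer n1 k1, outer t k2, outer m2 k2, outer n2 k2]"
  unfolding mats_indep_def list8_sum all8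
proof (intro allI impI)
  fix c :: "nat \<Rightarrow> real" and z :: real
  let ?Z = "c 0 *\<^sub>R outer d1 t + c 1 *\<^sub>R outer d2 t + c 2 *\<^sub>R outer t k1 + c 3 *\<^sub>R outer m1 k1 + c 4 *\<^sub>R outer n1 k1 +
    c 5 *\<^sub>R outer t k2 + c 6 *\<^sub>R outer m2 k2 + c 7 *\<^sub>R outer n2 k2 + z *\<^sub>R mat 1"
  assume Z: "?Z = 0"
  have t0: "t \<noteq> 0" and k1t: "k1 \<bullet> t = 0" and k2t: "k2 \<bullet> t = 0"
    using f1 f2 by (auto simp: face_frame_def inner_commute)
  have "?Z *v t = (c 0 * (t \<bullet> t)) *\<^sub>R d1 + (c 1 * (t \<bullet> t)) *\<^sub>R d2 + z *\<^sub>R t"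
    by (simp add: matrix_vector_mult_add_rdistrib scaleR_mat_mult outer_mult k1t k2t)
  then have "(c 0 * (t \<bullet> t)) *\<^sub>R d1 + (c 1 * (t \<bullet> t)) *\<^sub>R d2 + z *\<^sub>R t = 0" using Z by simp
  from orth3[OF assms(1,2) t0 assms(3-5) this] have c01: "c 0 = 0" "c 1 = 0" "z = 0" using t0 by auto
  have rows: "(c 2 * t$r + c 3 * m1$r + c 4 * n1$r) = 0 \<and> (c 5 * t$r + c 6 * m2$r + c 7 * n2$r) = 0" for r
  proof -
    have "(c 2 * t$r + c 3 * m1$r + c 4 * n1$r) *\<^sub>R k1 + (c 5 * t$r + c 6 * m2$r + c 7 * n2$r) *\<^sub>R k2 = ?Z $ r"
      using c01 by (simp add: outer_row algebra_simps)
    also have "\<dots> = 0" using Z by simp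
    finally show ?thesis using i2 unfolding indep2_def by blast
  qed
  have v1: "c 2 *\<^sub>R t + c 3 *\<^sub>R m1 + c 4 *\<^sub>R n1 = 0" and v2: "c 5 *\<^sub>R t + c 6 *\<^sub>R m2 + c 7 *\<^sub>R n2 = 0"
    using rows by (simp_all add: vec_eq_iff)
  have "c 2 = 0 \<and> c 3 = 0 \<and> c 4 = 0"
    using f1 v1 unfolding face_frame_def by (intro orth3) (auto simp: inner_commute)
  moreover have "c 5 = 0 \<and> c 6 = 0 \<and> c 7 = 0"
    using f2 v2 unfolding face_frame_def by (intro orth3) (auto simp: inner_commute)
  ultimately show "z = 0 \<and> c 0 = 0 \<and> c 1 = 0 \<and> c 2 = 0 \<and> c 3 = 0 \<and> c 4 = 0 \<and> c 5 = 0 \<and> c 6 = 0 \<and> c 7 = 0"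
    using c01 by simp
qed

lemma face_mats:
  fixes t kv n m :: vec3
  assumes f: "face_frame t kv n m"
  shows "mats_indep [outer t m, outer m t, outer t t - outer m m, outer n t, outer n m, outer t n, outer m n, outer n n]"
  unfolding mats_indep_def list8_sum all8
proof (intro allI impI)
  fix c :: "nat \<Rightarrow> real" and z :: real
  let ?Z = "c 0 *\<^sub>R outer t m + c 1 *\<^sub>R outer m t + c 2 *\<^sub>R (outer t t - outer m m) + c 3 *\<^sub>R outer n t + c 4 *\<^sub>R outer n m +
    c 5 *\<^sub>R outer t n + c 6 *\<^sub>R outer m n + c 7 *\<^sub>R outer n n + z *\<^sub>R mat 1"
  assume Z: "?Z = 0"
  have nz: "t \<noteq> 0" "m \<noteq> 0" "n \<noteq> 0" and o: "t \<bullet> m = 0" "m \<bullet> t = 0" "t \<bullet> n = 0" "n \<bullet> t = 0" "m \<bullet> n = 0" "n \<bullet> m = 0"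
    using f by (auto simp: face_frame_def inner_commute)
  have "?Z *v t = (c 2 * (t \<bullet> t) + z) *\<^sub>R t + (c 1 * (t \<bullet> t)) *\<^sub>R m + (c 3 * (t \<bullet> t)) *\<^sub>R n"
    by (simp add: matrix_vector_mult_add_rdistrib matrix_vector_mult_diff_rdistrib scaleR_mat_mult outer_mult o algebra_simps)
  then have "(c 2 * (t \<bullet> t) + z) *\<^sub>R t + (c 1 * (t \<bullet> t)) *\<^sub>R m + (c 3 * (t \<bullet> t)) *\<^sub>R n = 0" using Z by simp
  from orth3[OF nz o(1,3,5) this] have A: "c 2 * (t \<bullet> t) + z = 0" "c 1 = 0" "c 3 = 0" using nz by auto
  have "?Z *v m = (c 0 * (m \<bullet> m)) *\<^sub>R t + (z - c 2 * (m \<bullet> m)) *\<^sub>R m + (c 4 * (m \<bullet> m)) *\<^sub>R n"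
    by (simp add: matrix_vector_mult_add_rdistrib matrix_vector_mult_diff_rdistrib scaleR_mat_mult outer_mult o algebra_simps)
  then have "(c 0 * (m \<bullet> m)) *\<^sub>R t + (z - c 2 * (m \<bullet> m)) *\<^sub>R m + (c 4 * (m \<bullet> m)) *\<^sub>R n = 0" using Z by simp
  from orth3[OF nz o(1,3,5) this] have B: "c 0 = 0" "z - c 2 * (m \<bullet> m) = 0" "c 4 = 0" using nz by auto
  have "?Z *v n = (c 5 * (n \<bullet> n)) *\<^sub>R t + (c 6 * (n \<bullet> n)) *\<^sub>R m + (c 7 * (n \<bullet> n) + z) *\<^sub>R n"
    by (simp add: matrix_vector_mult_add_rdistrib matrix_vector_mult_diff_rdistrib scaleR_mat_mult outer_mult o algebra_simps)
  then have "(c 5 * (n \<bullet> n)) *\<^sub>R t + (c 6 * (n \<bullet> n)) *\<^sub>R m + (c 7 * (n \<bullet> n) + z) *\<^sub>R n = 0" using Z by simp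
  from orth3[OF nz o(1,3,5) this] have C: "c 5 = 0" "c 6 = 0" "c 7 * (n \<bullet> n) + z = 0" using nz by auto
  have tt: "t \<bullet> t > 0" "m \<bullet> m > 0" "n \<bullet> n > 0" using nz by auto
  have "c 2 * (t \<bullet> t + m \<bullet> m) = 0" using A(1) B(2) by (simp add: algebra_simps)
  then have c2: "c 2 = 0" using tt by (auto simp: add_pos_pos)
  then have "z = 0" using A(1) by simp
  then have "c 7 = 0" using C(3) tt by simp
  then show "z = 0 \<and> c 0 = 0 \<and> c 1 = 0 \<and> c 2 = 0 \<and> c 3 = 0 \<and> c 4 = 0 \<and> c 5 = 0 \<and> c 6 = 0 \<and> c 7 = 0"
    using A B C c2 \<open>z = 0\<close> by simp
qed

lemma inv_props:
  assumes "invertible (A::mat3)"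
  shows "A ** matrix_inv A = mat 1" "matrix_inv A ** A = mat 1"
proof -
  have "\<exists>A'. A ** A' = mat 1 \<and> A' ** A = mat 1" using assms unfolding invertible_def by blast
  then have "A ** matrix_inv A = mat 1 \<and> matrix_inv A ** A = mat 1"
    unfolding matrix_inv_def by (rule someI_ex)
  then show "A ** matrix_inv A = mat 1" "matrix_inv A ** A = mat 1" by auto
qed

lemma dotAM:
  assumes "invertible (A::mat3)"
  shows "(A *v u) \<bullet> (transpose (matrix_inv A) *v w) = u \<bullet> w"
proof -
  have "(A *v u) \<bullet> (transpose (matrix_inv A) *v w) = (u v* transpose A) \<bullet> (transpose (matrix_inv A) *v w)"
    by simp
  also have "\<dots> = u \<bullet> (transpose A *v (transpose (matrix_inv A) *v w))" by (rule dot_lmul_matrix)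
  also have "transpose A *v (transpose (matrix_inv A) *v w) = w"
    by (simp only: matrix_vector_mul_assoc matrix_transpose_mul[symmetric] inv_props[OF assms] transpose_mat matrix_vector_mul_lid)
  finally show ?thesis .
qed

lemma Mt_inj:
  assumes "invertible (A::mat3)" "transpose (matrix_inv A) *v w = 0"
  shows "w = 0"
proof -
  have "w = transpose A *v (transpose (matrix_inv A) *v w)"
    by (simp only: matrix_vector_mul_assoc matrix_transpose_mul[symmetric] inv_props[OF assms(1)] transpose_mat matrix_vector_mul_lid)
  then show ?thesis using assms(2) by simp
qed

lemma A_inj:
  assumes "invertible (A::mat3)" "A *v u = 0"
  shows "u = 0"
proof -
  have "u = matrix_inv A *v (A *v u)"
    by (simp add: matrix_vector_mul_assoc inv_props[OF assms(1)])
  then show ?thesis using assms(2) by simp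
qed

lemma Mt_invertible:
  assumes "invertible (A::mat3)"
  shows "invertible (transpose (matrix_inv A))"
  unfolding invertible_def
  by (rule exI[of _ "transpose A"])
     (simp add: matrix_transpose_mul[symmetric] inv_props[OF assms])

lemma cross_Mt:
  assumes "invertible (A::mat3)"
  shows "cross3 (transpose (matrix_inv A) *v a) (transpose (matrix_inv A) *v b) = 0 \<longleftrightarrow> cross3 a b = 0"
proof
  let ?M = "transpose (matrix_inv A)"
  have d: "det ?M \<noteq> 0" using Mt_invertible[OF assms] invertible_det_nz by blast
  have e: "transpose ?M *v cross3 (?M *v a) (?M *v b) = det ?M *\<^sub>R cross3 a b" by (rule cross_matrix_mult)
  show "cross3 (?M *v a) (?M *v b) = 0 \<Longrightarrow> cross3 a b = 0" using e d by simp
  assume "cross3 a b = 0"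
  then have "matrix_inv A *v cross3 (?M *v a) (?M *v b) = 0" using e by simp
  then have "A *v (matrix_inv A *v cross3 (?M *v a) (?M *v b)) = 0" by simp
  then show "cross3 (?M *v a) (?M *v b) = 0"
    by (simp add: matrix_vector_mul_assoc inv_props[OF assms])
qed

lemma kvec_eq:
  assumes "invertible (A::mat3)"
  shows "kvec A k j = transpose (matrix_inv A) *v
     (if cross3 (nu_ref k) (fst (kappa_ref j)) \<noteq> 0 then fst (kappa_ref j) else snd (kappa_ref j))"
proof -
  have d: "det A \<noteq> 0" using assms invertible_det_nz by blast
  have "cross3 (nrm A k) (transpose (matrix_inv A) *v fst (kappa_ref j)) \<noteq> 0 \<longleftrightarrow>
        cross3 (nu_ref k) (fst (kappa_ref j)) \<noteq> 0"
    unfolding nrm_def cross_mult_left using d cross_Mt[OF assms] by simp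
  then show ?thesis unfolding kvec_def Let_def by simp
qed

lemma mvec_eq: "mvec J k j = (nrm J k \<bullet> nrm J k) *\<^sub>R kvec J k j - (nrm J k \<bullet> kvec J k j) *\<^sub>R nrm J k"
  unfolding mvec_def by (simp add: matrix_vector_mult_diff_rdistrib scaleR_mat_mult outer_mult power2_norm_eq_inner)

lemma frame_gen:
  assumes A: "invertible (A::mat3)" and "tau_ref j \<noteq> 0" "nu_ref k \<noteq> 0" "tau_ref j \<bullet> nu_ref k = 0"
    "tau_ref j \<bullet> fst (kappa_ref j) = 0" "tau_ref j \<bullet> snd (kappa_ref j) = 0"
    "cross3 (nu_ref k) (fst (kappa_ref j)) \<noteq> 0 \<or> cross3 (nu_ref k) (snd (kappa_ref j)) \<noteq> 0"
  shows "face_frame (tang A j) (kvec A k j) (nrm A k) (mvec A k j)"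
proof -
  let ?M = "transpose (matrix_inv A)"
  define ks where "ks = (if cross3 (nu_ref k) (fst (kappa_ref j)) \<noteq> 0 then fst (kappa_ref j) else snd (kappa_ref j))"
  have d: "det A \<noteq> 0" using A invertible_det_nz by blast
  have kv: "kvec A k j = ?M *v ks" using kvec_eq[OF A] by (simp add: ks_def)
  have ksc: "cross3 (nu_ref k) ks \<noteq> 0" using assms(7) by (auto simp: ks_def)
  have tks: "tau_ref j \<bullet> ks = 0" using assms(5,6) by (simp add: ks_def)
  define t where "t = tang A j"
  define n where "n = nrm A k"
  define kk where "kk = kvec A k j"
  have t0: "t \<noteq> 0" using A_inj[OF A] assms(2) by (auto simp: t_def tang_def)
  have n0: "n \<noteq> 0" using Mt_inj[OF A] assms(3) d by (auto simp: n_def nrm_def)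
  have tk: "t \<bullet> kk = 0" using dotAM[OF A] tks by (simp add: t_def kk_def kv tang_def)
  have tn: "t \<bullet> n = 0" using dotAM[OF A] assms(4) by (simp add: t_def n_def nrm_def tang_def)
  have nk: "cross3 n kk \<noteq> 0"
    using cross_Mt[OF A, of "nu_ref k" ks] ksc d by (simp add: n_def kk_def kv nrm_def cross_mult_left)
  have m: "mvec A k j = (n \<bullet> n) *\<^sub>R kk - (n \<bullet> kk) *\<^sub>R n" by (simp add: mvec_eq n_def kk_def)
  have mn: "mvec A k j \<bullet> n = 0" unfolding m by (simp add: inner_diff_left inner_commute[of kk n])
  have tm: "t \<bullet> mvec A k j = 0" unfolding m by (simp add: inner_diff_right tk tn)
  have "cross3 n (mvec A k j) = (n \<bullet> n) *\<^sub>R cross3 n kk" unfolding m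
    by (simp add: Cross3.right_diff_distrib cross_mult_right)
  then have m0: "mvec A k j \<noteq> 0" using nk n0 by auto
  show ?thesis unfolding face_frame_def using t0 n0 m0 tk tn mn tm by (simp add: t_def n_def kk_def)
qed

lemma sgn_star_mul: "sgn_star x * x = \<bar>x\<bar>"
  by (simp add: sgn_star_def)

lemma d2_props:
  fixes t :: vec3
  assumes "t \<noteq> 0"
  shows "d2vec t \<noteq> 0" "d2vec t \<bullet> t = 0"
proof -
  have s: "sgn_star x = 1 \<or> sgn_star x = -1" for x by (simp add: sgn_star_def)
  show "d2vec t \<bullet> t = 0"
    unfolding d2vec_def inner_vec_def sum_3
    by (simp add: sgn_star_def abs_if algebra_simps)
  show "d2vec t \<noteq> 0"
  proof
    assume z: "d2vec t = 0"
    have c3: "sgn_star (t$3) * (\<bar>t$1\<bar> + \<bar>t$2\<bar>) = 0" using z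
      unfolding d2vec_def by (simp add: vec_eq_iff forall_3 algebra_simps)
    then have "\<bar>t$1\<bar> + \<bar>t$2\<bar> = 0" using s[of "t$3"] by auto
    then have t12: "t$1 = 0" "t$2 = 0" by auto
    have "sgn_star (t$1) * \<bar>t$3\<bar> = 0" using z unfolding d2vec_def by (simp add: vec_eq_iff forall_3)
    then have "t$3 = 0" using s[of "t$1"] by auto
    then show False using t12 assms by (simp add: vec_eq_iff forall_3)
  qed
qed

lemma d1_props:
  fixes t :: vec3
  assumes "t \<noteq> 0"
  shows "d1vec t \<noteq> 0" "d1vec t \<bullet> t = 0" "d1vec t \<bullet> d2vec t = 0"
proof -
  show "d1vec t \<bullet> t = 0" unfolding d1vec_def by (simp add: dot_cross_self)
  show "d1vec t \<bullet> d2vec t = 0" unfolding d1vec_def by (simp add: dot_cross_self inner_commute)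
  have "(norm (d1vec t))\<^sup>2 = (norm (d2vec t) * norm t)\<^sup>2"
    using norm_cross_dot[of "d2vec t" t] d2_props[OF assms] unfolding d1vec_def by simp
  then show "d1vec t \<noteq> 0" using d2_props[OF assms] assms by auto
qed

lemma edge_conds:
  "\<forall>k\<in>set facesK. \<forall>j\<in>set (face_edges k). tau_ref j \<noteq> 0 \<and> nu_ref k \<noteq> 0 \<and> tau_ref j \<bullet> nu_ref k = 0 \<and>
    tau_ref j \<bullet> fst (kappa_ref j) = 0 \<and> tau_ref j \<bullet> snd (kappa_ref j) = 0 \<and>
    (cross3 (nu_ref k) (fst (kappa_ref j)) \<noteq> 0 \<or> cross3 (nu_ref k) (snd (kappa_ref j)) \<noteq> 0)"
  by (simp add: facesK_def tau_ref_def nu_ref_def kappa_ref_def e1_def e2_def e3_def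
      inner_vec_def sum_3 cross3_def vec_eq_iff forall_3)

lemma min_edge_eq: "a < b \<Longrightarrow> b < c \<Longrightarrow> min_edge (a,b,c) = (a,b)"
  unfolding min_edge_def
  by (rule the_equality) (auto simp: lex_le_def)

definition EM :: "mat3 \<Rightarrow> nat \<times> nat \<Rightarrow> mat3 list" where
  "EM A j = [outer (d1vec (tang A j)) (tang A j), outer (d2vec (tang A j)) (tang A j)] @
     concat (map (\<lambda>k. if j \<in> set (face_edges k) then
       [outer (tang A j) (kvec A k j), outer (mvec A k j) (kvec A k j), outer (nrm A k) (kvec A k j)] else []) facesK)"

definition FM :: "mat3 \<Rightarrow> nat \<times> nat \<times> nat \<Rightarrow> mat3 list" where
  "FM A k = (let j = min_edge k; n = nrm A k; t = tang A j; m = mvec A k j in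
     [outer t m, outer m t, outer t t - outer m m, outer n t, outer n m] @ [outer t n, outer m n, outer n n])"

definition ksel :: "nat \<times> nat \<times> nat \<Rightarrow> nat \<times> nat \<Rightarrow> vec3" where
  "ksel k j = (if cross3 (nu_ref k) (fst (kappa_ref j)) \<noteq> 0 then fst (kappa_ref j) else snd (kappa_ref j))"

lemma kvec_indep2:
  assumes A: "invertible (A::mat3)" and i: "indep2 (ksel k1 j) (ksel k2 j)"
  shows "indep2 (kvec A k1 j) (kvec A k2 j)"
  unfolding indep2_def kvec_eq[OF A] ksel_def[symmetric]
proof (intro allI impI)
  fix a b
  assume "a *\<^sub>R (transpose (matrix_inv A) *v ksel k1 j) + b *\<^sub>R (transpose (matrix_inv A) *v ksel k2 j) = 0"
  then have "transpose (matrix_inv A) *v (a *\<^sub>R ksel k1 j + b *\<^sub>R ksel k2 j) = 0"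
    by (simp add: matrix_vector_right_distrib matrix_vector_mult_scaleR)
  then have "a *\<^sub>R ksel k1 j + b *\<^sub>R ksel k2 j = 0" by (rule Mt_inj[OF A])
  then show "a = 0 \<and> b = 0" using i unfolding indep2_def by blast
qed

lemma frame_face:
  assumes A: "invertible (A::mat3)" and "k \<in> set facesK" "j \<in> set (face_edges k)"
  shows "face_frame (tang A j) (kvec A k j) (nrm A k) (mvec A k j)"
  using edge_conds assms(2,3) by (intro frame_gen[OF A]) auto

lemma edge_case:
  assumes A: "invertible (A::mat3)" and k: "k1 \<in> set facesK" "k2 \<in> set facesK"
    "j \<in> set (face_edges k1)" "j \<in> set (face_edges k2)" and i: "indep2 (ksel k1 j) (ksel k2 j)"
  shows "mats_indep ([outer (d1vec (tang A j)) (tang A j), outer (d2vec (tang A j)) (tang A j)] @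
       [outer (tang A j) (kvec A k1 j), outer (mvec A k1 j) (kvec A k1 j), outer (nrm A k1) (kvec A k1 j)] @
       [outer (tang A j) (kvec A k2 j), outer (mvec A k2 j) (kvec A k2 j), outer (nrm A k2) (kvec A k2 j)])"
proof -
  have f1: "face_frame (tang A j) (kvec A k1 j) (nrm A k1) (mvec A k1 j)" using frame_face[OF A k(1,3)] .
  have f2: "face_frame (tang A j) (kvec A k2 j) (nrm A k2) (mvec A k2 j)" using frame_face[OF A k(2,4)] .
  have t0: "tang A j \<noteq> 0" using f1 by (simp add: face_frame_def)
  show ?thesis using edge_mats[OF d1_props(1)[OF t0] d2_props(1)[OF t0] d1_props(3)[OF t0] d1_props(2)[OF t0]
      d2_props(2)[OF t0] f1 f2 kvec_indep2[OF A i]] by simp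
qed

lemma EM_12: "invertible (A::mat3) \<Longrightarrow> mats_indep (EM A (1,2))"
proof -
  assume A: "invertible A"
  have "indep2 (ksel (1,2,3) (1,2)) (ksel (1,2,4) (1,2))"
    by (simp add: ksel_def indep2_def nu_ref_def kappa_ref_def e1_def e2_def e3_def cross3_def vec_eq_iff forall_3)
  from edge_case[OF A _ _ _ _ this] show ?thesis by (simp add: EM_def facesK_def)
qed

lemma EM_13: "invertible (A::mat3) \<Longrightarrow> mats_indep (EM A (1,3))"
proof -
  assume A: "invertible A"
  have "indep2 (ksel (1,2,3) (1,3)) (ksel (1,3,4) (1,3))"
    by (simp add: ksel_def indep2_def nu_ref_def kappa_ref_def e1_def e2_def e3_def cross3_def vec_eq_iff forall_3)
  from edge_case[OF A _ _ _ _ this] show ?thesis by (simp add: EM_def facesK_def)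
qed

lemma EM_14: "invertible (A::mat3) \<Longrightarrow> mats_indep (EM A (1,4))"
proof -
  assume A: "invertible A"
  have "indep2 (ksel (1,2,4) (1,4)) (ksel (1,3,4) (1,4))"
    by (simp add: ksel_def indep2_def nu_ref_def kappa_ref_def e1_def e2_def e3_def cross3_def vec_eq_iff forall_3)
  from edge_case[OF A _ _ _ _ this] show ?thesis by (simp add: EM_def facesK_def)
qed

lemma EM_23: "invertible (A::mat3) \<Longrightarrow> mats_indep (EM A (2,3))"
proof -
  assume A: "invertible A"
  have "indep2 (ksel (1,2,3) (2,3)) (ksel (2,3,4) (2,3))"
    by (simp add: ksel_def indep2_def nu_ref_def kappa_ref_def e1_def e2_def e3_def cross3_def vec_eq_iff forall_3)
  from edge_case[OF A _ _ _ _ this] show ?thesis by (simp add: EM_def facesK_def)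
qed

lemma EM_24: "invertible (A::mat3) \<Longrightarrow> mats_indep (EM A (2,4))"
proof -
  assume A: "invertible A"
  have "indep2 (ksel (1,2,4) (2,4)) (ksel (2,3,4) (2,4))"
    by (simp add: ksel_def indep2_def nu_ref_def kappa_ref_def e1_def e2_def e3_def cross3_def vec_eq_iff forall_3)
  from edge_case[OF A _ _ _ _ this] show ?thesis by (simp add: EM_def facesK_def)
qed

lemma EM_34: "invertible (A::mat3) \<Longrightarrow> mats_indep (EM A (3,4))"
proof -
  assume A: "invertible A"
  have "indep2 (ksel (1,3,4) (3,4)) (ksel (2,3,4) (3,4))"
    by (simp add: ksel_def indep2_def nu_ref_def kappa_ref_def e1_def e2_def e3_def cross3_def vec_eq_iff forall_3)
  from edge_case[OF A _ _ _ _ this] show ?thesis by (simp add: EM_def facesK_def)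
qed

lemma EM_indep: "invertible (A::mat3) \<Longrightarrow> j \<in> set edgesJ \<Longrightarrow> mats_indep (EM A j)"
  using EM_12 EM_13 EM_14 EM_23 EM_24 EM_34 by (auto simp: edgesJ_def)

lemma min_edge_in: "k \<in> set facesK \<Longrightarrow> min_edge k \<in> set (face_edges k)"
  by (auto simp: facesK_def min_edge_eq)

lemma FM_indep: "invertible (A::mat3) \<Longrightarrow> k \<in> set facesK \<Longrightarrow> mats_indep (FM A k)"
  using face_mats[OF frame_face[OF _ _ min_edge_in]] by (simp add: FM_def Let_def)

lemma abstract_main:
  fixes X :: "vec3 set" and lamL Lq :: "(vec3 \<Rightarrow> real) list"
    and PL :: "((vec3 \<Rightarrow> real) \<times> mat3 list) list" and B1 :: "(vec3 \<Rightarrow> mat3) list"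
  assumes indep_p: "lin_indep_on X (lamL @ map fst PL)"
  and span_p: "spans_on X (lamL @ map fst PL) (Poly3 p)"
  and polyPL: "\<forall>\<phi>\<in>set (map fst PL). \<phi> \<in> Poly3 p"
  and indep_q: "lin_indep_on X Lq"
  and span1: "spans_on X lamL (Poly3 1)"
  and p1: "p \<ge> 1"
  and verts: "\<forall>k<length lamL. \<exists>v\<in>X. (\<forall>i<length lamL. (lamL!i) v = (if i = k then 1 else 0))
      \<and> (\<forall>\<phi>\<in>set (map fst PL). \<phi> v = 0) \<and> (\<forall>\<psi>\<in>set Lq. \<psi> v = 0)"
  and B1: "basis_on X B1 MatPoly1"
  and mats: "\<forall>a<length PL. mats_indep (snd (PL!a))"
  shows "lin_indep_on X (B1 @ concat (map (\<lambda>(\<phi>,Ms). map (sm \<phi>) Ms) PL) @ map (\<lambda>\<psi>. sm \<psi> (mat 1)) Lq)"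
  unfolding lin_indep_on_def
proof (rule allI, rule impI)
  fix c :: "nat \<Rightarrow> real"
  define Ls where "Ls = map (\<lambda>(\<phi>,Ms). map (sm \<phi>) Ms) PL"
  define G where "G = concat Ls"
  define H where "H = map (\<lambda>\<psi>. sm \<psi> (mat 1)) Lq"
  define n1 where "n1 = length B1"
  define nG where "nG = length G"
  define n0 where "n0 = length lamL"
  define nP where "nP = length PL"
  define nq where "nq = length Lq"
  define \<phi> where "\<phi> a = fst (PL!a)" for a
  define Ms where "Ms a = snd (PL!a)" for a
  define N where "N a = (\<Sum>b<length (Ms a). c (n1 + off Ls a + b) *\<^sub>R Ms a ! b)" for a
  define Bs where "Bs x = (\<Sum>i<n1. c i *\<^sub>R (B1!i) x)" for x
  define \<psi> where "\<psi> x = (\<Sum>i<nq. c (n1 + nG + i) * (Lq!i) x)" for x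
  assume eq0: "\<forall>x\<in>X. (\<Sum>i<length (B1 @ concat (map (\<lambda>(\<phi>,Ms). map (sm \<phi>) Ms) PL) @ map (\<lambda>\<psi>. sm \<psi> (mat 1)) Lq).
      c i *\<^sub>R ((B1 @ concat (map (\<lambda>(\<phi>,Ms). map (sm \<phi>) Ms) PL) @ map (\<lambda>\<psi>. sm \<psi> (mat 1)) Lq) ! i) x) = 0"
  have lenLs: "length Ls = nP" by (simp add: Ls_def nP_def)
  have Lsa: "a < nP \<Longrightarrow> Ls ! a = map (sm (\<phi> a)) (Ms a)" for a
    by (simp add: Ls_def nP_def \<phi>_def Ms_def split: prod.splits)
  have Gsum: "(\<Sum>i<nG. c (n1 + i) *\<^sub>R (G!i) x) = (\<Sum>a<nP. \<phi> a x *\<^sub>R N a)" for x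
  proof -
    have "(\<Sum>i<nG. c (n1 + i) *\<^sub>R (G!i) x) = (\<Sum>a<length Ls. \<Sum>b<length (Ls!a). c (n1 + (off Ls a + b)) *\<^sub>R (Ls ! a ! b) x)"
      unfolding nG_def G_def using sum_concat_idx[of "\<lambda>i F. c (n1 + i) *\<^sub>R F x" Ls] by simp
    also have "\<dots> = (\<Sum>a<nP. \<phi> a x *\<^sub>R N a)"
      unfolding lenLs N_def
      by (intro sum.cong refl) (simp add: Lsa scaleR_sum_right sm_def add.assoc mult.commute)
    finally show ?thesis .
  qed
  have key: "Bs x + (\<Sum>a<nP. \<phi> a x *\<^sub>R N a) + \<psi> x *\<^sub>R mat 1 = 0" if "x \<in> X" for x
  proof -
    have "0 = (\<Sum>i<length (B1 @ G @ H). c i *\<^sub>R ((B1 @ G @ H) ! i) x)"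
      using eq0 that by (simp add: G_def H_def Ls_def)
    also have "\<dots> = Bs x + (\<Sum>i<nG. c (n1 + i) *\<^sub>R (G!i) x) + (\<Sum>i<nq. c (n1 + nG + i) *\<^sub>R (H!i) x)"
      using sum_append_idx[of "\<lambda>i F. c i *\<^sub>R F x" B1 "G @ H"]
        sum_append_idx[of "\<lambda>i F. c (length B1 + i) *\<^sub>R F x" G H]
      by (simp add: Bs_def n1_def nG_def nq_def H_def add.assoc)
    also have "(\<Sum>i<nq. c (n1 + nG + i) *\<^sub>R (H!i) x) = \<psi> x *\<^sub>R mat 1"
      by (simp add: \<psi>_def H_def nq_def sm_def scaleR_sum_left)
    finally show ?thesis using Gsum by simp
  qed
  have mat11: "(mat 1 :: mat3) $ r $ r = 1" for r by (simp add: mat_def)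
  have ent: "(Bs x) $ r $ s + (\<Sum>a<nP. \<phi> a x * N a $ r $ s) + \<psi> x * (mat 1 :: mat3) $ r $ s = 0"
    if "x \<in> X" for x r s
  proof -
    have "(Bs x + (\<Sum>a<nP. \<phi> a x *\<^sub>R N a) + \<psi> x *\<^sub>R mat 1) $ r $ s = 0"
      using key[OF that] by simp
    then show ?thesis by simp
  qed
  have phiP: "a < nP \<Longrightarrow> \<phi> a \<in> Poly3 p" for a
    using polyPL by (auto simp: \<phi>_def nP_def)
  have B1P: "i < n1 \<Longrightarrow> (\<lambda>x. (B1!i) x $ r $ s) \<in> Poly3 p" for i r s
  proof -
    assume "i < n1"
    then have "B1!i \<in> MatPoly1" using B1 by (auto simp: basis_on_def n1_def)
    then have "(\<lambda>x. (B1!i) x $ r $ s) \<in> Poly3 1" by (simp add: MatPoly1_def)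
    then show ?thesis using Poly3_mono[OF p1] by blast
  qed
  have BsP1: "(\<lambda>x. Bs x $ r $ s) \<in> Poly3 1" for r s
  proof -
    have "(\<lambda>x. \<Sum>i\<in>{..<n1}. c i * (B1!i) x $ r $ s) \<in> Poly3 1"
      apply (rule Poly3_sum) using B1 unfolding basis_on_def n1_def MatPoly1_def by (auto dest!: nth_mem)
    then show ?thesis by (simp add: Bs_def)
  qed
  have BsP: "(\<lambda>x. Bs x $ r $ s) \<in> Poly3 p" for r s
    using BsP1 Poly3_mono[OF p1] by blast
  define g where "g x = - ((Bs x) $ 1 $ 1 + (\<Sum>a<nP. N a $ 1 $ 1 * \<phi> a x))" for x
  have gP: "g \<in> Poly3 p"
  proof -
    have "(\<lambda>x. (Bs x) $ 1 $ 1 + (\<Sum>a\<in>{..<nP}. N a $ 1 $ 1 * \<phi> a x)) \<in> Poly3 p"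
      by (intro Poly3_add BsP Poly3_sum) (auto intro: phiP)
    from Poly3_scale[OF this, of "-1"] show ?thesis unfolding g_def by (simp add: algebra_simps)
  qed
  have g_psi: "x \<in> X \<Longrightarrow> g x = \<psi> x" for x
    using ent[of x 1 1] by (simp add: g_def mat11 mult.commute)
  obtain e where e: "\<forall>x\<in>X. g x = (\<Sum>i<length (lamL @ map fst PL). e i *\<^sub>R ((lamL @ map fst PL) ! i) x)"
    using span_p gP unfolding spans_on_def by blast
  have e_split: "(\<Sum>i<length (lamL @ map fst PL). e i *\<^sub>R ((lamL @ map fst PL) ! i) x)
      = (\<Sum>k<n0. e k * (lamL!k) x) + (\<Sum>a<nP. e (n0 + a) * \<phi> a x)" for x
    using sum_append_idx[of "\<lambda>i F. e i *\<^sub>R F x" lamL "map fst PL"]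
    by (simp add: n0_def nP_def \<phi>_def)
  have e0: "e k = 0" if "k < n0" for k
  proof -
    obtain v where v: "v \<in> X" "\<forall>i<n0. (lamL!i) v = (if i = k then 1 else 0)"
      "\<forall>\<phi>\<in>set (map fst PL). \<phi> v = 0" "\<forall>\<psi>\<in>set Lq. \<psi> v = 0"
      using verts \<open>k < n0\<close> unfolding n0_def by blast
    have "\<psi> v = 0" using v(4) unfolding \<psi>_def nq_def by (auto intro!: sum.neutral)
    moreover have "\<phi> a v = 0" if "a < nP" for a using v(3) that unfolding \<phi>_def nP_def by auto
    moreover have "(\<Sum>i<n0. e i * (lamL!i) v) = e k"
    proof -
      have "(\<Sum>i<n0. e i * (lamL!i) v) = (\<Sum>i<n0. if i = k then e k else 0)"
        using v(2) by (intro sum.cong) auto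
      then show ?thesis using \<open>k < n0\<close> by simp
    qed
    ultimately show ?thesis using e v(1) g_psi[OF v(1)] e_split[of v] by simp
  qed
  have psi_e: "\<psi> x = (\<Sum>a<nP. e (n0 + a) * \<phi> a x)" if "x \<in> X" for x
    using e that g_psi e_split[of x] e0 by simp
  have key2: "Bs x + (\<Sum>a<nP. \<phi> a x *\<^sub>R (N a + e (n0 + a) *\<^sub>R mat 1)) = 0" if "x \<in> X" for x
  proof -
    have "\<psi> x *\<^sub>R (mat 1 :: mat3) = (\<Sum>a<nP. \<phi> a x *\<^sub>R (e (n0 + a) *\<^sub>R mat 1))"
      by (simp add: psi_e[OF that] scaleR_sum_left mult.commute)
    then show ?thesis using key[OF that] by (simp add: scaleR_add_right sum.distrib add.assoc)
  qed
  have rs: "(\<forall>a<nP. (N a + e (n0 + a) *\<^sub>R mat 1) $ r $ s = 0) \<and> (\<forall>x\<in>X. Bs x $ r $ s = 0)" for r s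
  proof -
    obtain \<eta> where \<eta>: "\<forall>x\<in>X. Bs x $ r $ s = (\<Sum>k<length lamL. \<eta> k *\<^sub>R (lamL ! k) x)"
      using bspec[OF span1[unfolded spans_on_def] BsP1[of r s]] by auto
    define d where "d i = (if i < n0 then \<eta> i else (N (i - n0) + e i *\<^sub>R mat 1) $ r $ s)" for i
    have "\<forall>x\<in>X. (\<Sum>i<length (lamL @ map fst PL). d i *\<^sub>R ((lamL @ map fst PL) ! i) x) = 0"
    proof
      fix x assume x: "x \<in> X"
      have "(\<Sum>i<length (lamL @ map fst PL). d i *\<^sub>R ((lamL @ map fst PL) ! i) x)
          = (\<Sum>k<n0. \<eta> k * (lamL!k) x) + (\<Sum>a<nP. (N a + e (n0 + a) *\<^sub>R mat 1) $ r $ s * \<phi> a x)"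
        using sum_append_idx[of "\<lambda>i F. d i *\<^sub>R F x" lamL "map fst PL"]
        by (simp add: n0_def nP_def \<phi>_def d_def)
      also have "\<dots> = (Bs x + (\<Sum>a<nP. \<phi> a x *\<^sub>R (N a + e (n0 + a) *\<^sub>R mat 1))) $ r $ s"
        using \<eta> x by (simp add: n0_def mult.commute)
      also have "\<dots> = 0" using key2[OF x] by simp
      finally show "(\<Sum>i<length (lamL @ map fst PL). d i *\<^sub>R ((lamL @ map fst PL) ! i) x) = 0" .
    qed
    then have d0: "\<forall>i<n0 + nP. d i = 0"
      using indep_p unfolding lin_indep_on_def by (simp add: n0_def nP_def)
    have "\<forall>a<nP. (N a + e (n0 + a) *\<^sub>R mat 1) $ r $ s = 0"
    proof (intro allI impI)
      fix a assume "a < nP" then show "(N a + e (n0 + a) *\<^sub>R mat 1) $ r $ s = 0"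
        using d0[rule_format, of "n0 + a"] by (simp add: d_def)
    qed
    moreover have "\<forall>k<n0. \<eta> k = 0"
    proof (intro allI impI)
      fix k assume "k < n0" then show "\<eta> k = 0" using d0[rule_format, of k] by (simp add: d_def)
    qed
    then have "\<forall>x\<in>X. Bs x $ r $ s = 0"
      using \<eta> by (simp add: n0_def)
    ultimately show ?thesis by blast
  qed
  have Nz: "N a + e (n0 + a) *\<^sub>R mat 1 = 0" if "a < nP" for a
    using rs that by (simp add: vec_eq_iff)
  have cG: "e (n0 + a) = 0 \<and> (\<forall>b<length (Ms a). c (n1 + off Ls a + b) = 0)" if "a < nP" for a
  proof -
    have "mats_indep (Ms a)" using mats that by (simp add: Ms_def nP_def)
    from this[unfolded mats_indep_def, rule_format, of "\<lambda>b. c (n1 + off Ls a + b)" "e (n0+a)"]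
    show ?thesis using Nz[OF that] unfolding N_def by simp
  qed
  have Bs0: "\<forall>x\<in>X. Bs x = 0" using rs by (simp add: vec_eq_iff)
  have cB: "\<forall>i<n1. c i = 0"
    using B1 Bs0 unfolding basis_on_def lin_indep_on_def Bs_def n1_def by simp
  have "\<forall>x\<in>X. \<psi> x = 0" using psi_e cG by simp
  then have cq: "\<forall>i<nq. c (n1 + nG + i) = 0"
    using indep_q[unfolded lin_indep_on_def, rule_format, of "\<lambda>i. c (n1+nG+i)"] unfolding \<psi>_def nq_def by simp
  have cG': "\<forall>i<nG. c (n1 + i) = 0"
  proof (intro allI impI)
    fix i assume "i < nG"
    show "c (n1 + i) = 0"
    proof (rule concat_idx_cover[where P = "\<lambda>i. c (n1 + i) = 0" and Ls = Ls])
      show "i < length (concat Ls)" using \<open>i < nG\<close> by (simp add: nG_def G_def)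
    next
      fix a b assume "a < length Ls" "b < length (Ls ! a)"
      then show "c (n1 + (off Ls a + b)) = 0"
        using cG[of a] lenLs Lsa[of a] by (simp add: add.assoc)
    qed
  qed
  show "\<forall>i<length (B1 @ concat (map (\<lambda>(\<phi>,Ms). map (sm \<phi>) Ms) PL) @ map (\<lambda>\<psi>. sm \<psi> (mat 1)) Lq). c i = 0"
  proof (intro allI impI)
    fix i assume i: "i < length (B1 @ concat (map (\<lambda>(\<phi>,Ms). map (sm \<phi>) Ms) PL) @ map (\<lambda>\<psi>. sm \<psi> (mat 1)) Lq)"
    then have i': "i < n1 + nG + nq" by (simp add: n1_def nG_def G_def Ls_def nq_def)
    show "c i = 0"
    proof (cases "i < n1")
      case True then show ?thesis using cB by simp
    next
      case False
      show ?thesis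
      proof (cases "i < n1 + nG")
        case True
        then show ?thesis using cG'[rule_format, of "i - n1"] False by simp
      next
        case False2: False
        then show ?thesis using cq[rule_format, of "i - n1 - nG"] i' False by simp
      qed
    qed
  qed
qed

lemma lin_indep_perm:
  assumes m: "mset L = mset L'" and i: "lin_indep_on X L'"
  shows "lin_indep_on X L"
  unfolding lin_indep_on_def
proof (rule allI, rule impI)
  fix c assume h: "\<forall>x\<in>X. (\<Sum>i<length L. c i *\<^sub>R (L ! i) x) = 0"
  obtain f where f: "bij_betw f {..<length L} {..<length L'}" "\<forall>i<length L. L ! i = L' ! (f i)"
    using permutation_Ex_bij[OF m] by blast
  define g where "g = inv_into {..<length L} f"
  have gf: "i < length L \<Longrightarrow> g (f i) = i" for i
    using f(1) by (simp add: g_def bij_betw_inv_into_left)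
  define c' where "c' j = c (g j)" for j
  have "\<forall>x\<in>X. (\<Sum>j<length L'. c' j *\<^sub>R (L' ! j) x) = 0"
  proof
    fix x assume x: "x \<in> X"
    have "(\<Sum>j<length L'. c' j *\<^sub>R (L' ! j) x) = (\<Sum>i<length L. c' (f i) *\<^sub>R (L' ! (f i)) x)"
      using sum.reindex_bij_betw[OF f(1), of "\<lambda>j. c' j *\<^sub>R (L' ! j) x"] by simp
    also have "\<dots> = (\<Sum>i<length L. c i *\<^sub>R (L ! i) x)"
      using f(2) gf by (intro sum.cong) (auto simp: c'_def)
    finally show "(\<Sum>j<length L'. c' j *\<^sub>R (L' ! j) x) = 0" using h x by simp
  qed
  then have z: "\<forall>j<length L'. c' j = 0" using i unfolding lin_indep_on_def by blast
  show "\<forall>i<length L. c i = 0"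
  proof (intro allI impI)
    fix i assume "i < length L"
    then have "f i < length L'" using f(1) by (auto simp: bij_betw_def)
    then show "c i = 0" using z gf[OF \<open>i < length L\<close>] by (auto simp: c'_def)
  qed
qed

lemma lin_indep_suffix:
  assumes "lin_indep_on X (xs @ ys)"
  shows "lin_indep_on X ys"
  unfolding lin_indep_on_def
proof (rule allI, rule impI)
  fix c assume h: "\<forall>x\<in>X. (\<Sum>i<length ys. c i *\<^sub>R (ys ! i) x) = 0"
  define d where "d i = (if i < length xs then 0 else c (i - length xs))" for i
  have "\<forall>x\<in>X. (\<Sum>i<length (xs @ ys). d i *\<^sub>R ((xs @ ys) ! i) x) = 0"
  proof
    fix x assume "x \<in> X"
    then show "(\<Sum>i<length (xs @ ys). d i *\<^sub>R ((xs @ ys) ! i) x) = 0"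
      using h sum_append_idx[of "\<lambda>i F. d i *\<^sub>R F x" xs ys] by (simp add: d_def)
  qed
  then have "\<forall>i<length (xs @ ys). d i = 0" using assms unfolding lin_indep_on_def by blast
  then show "\<forall>i<length ys. c i = 0"
    by (auto simp: d_def) (metis add_diff_cancel_left' nat_add_left_cancel_less not_add_less1)
qed

lemma S_mats:
  assumes d: "distinct S" and i: "independent (set S)" and sp: "span (set S) = sl3"
  shows "mats_indep S"
  unfolding mats_indep_def
proof (intro allI impI)
  fix c z assume h: "(\<Sum>i<length S. c i *\<^sub>R S!i) + z *\<^sub>R mat 1 = (0::mat3)"
  have tr0: "trace (S!i) = 0" if "i < length S" for i
  proof -
    have "S!i \<in> span (set S)" using that by (intro span_base) simp
    then show ?thesis using sp by (simp add: sl3_def)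
  qed
  have trs: "trace (\<Sum>i\<in>I. c i *\<^sub>R S!i) = (\<Sum>i\<in>I. c i * trace (S!i))" if "finite I" for I
    by (simp add: trace_def sum_distrib_left) (rule sum.swap)
  have "trace ((\<Sum>i<length S. c i *\<^sub>R S!i) + z *\<^sub>R mat 1) = 0" using h by (simp add: trace_def)
  moreover have "trace (z *\<^sub>R (mat 1::mat3)) = 3 * z" by (simp add: trace_def mat_def sum_3)
  ultimately have "z * 3 = 0" using tr0 by (simp add: trace_add trs)
  then have z: "z = 0" by simp
  then have h2: "(\<Sum>i<length S. c i *\<^sub>R S!i) = 0" using h by simp
  define idx where "idx v = (THE i. i < length S \<and> S!i = v)" for v
  have idx: "i < length S \<Longrightarrow> idx (S!i) = i" for i
    unfolding idx_def using d by (intro the_equality) (auto simp: nth_eq_iff_index_eq)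
  have "(\<Sum>i<length S. c i *\<^sub>R S!i) = (\<Sum>v\<in>set S. c (idx v) *\<^sub>R v)"
  proof -
    have "bij_betw (\<lambda>i. S!i) {..<length S} (set S)"
      using d by (simp add: bij_betw_def inj_on_def nth_eq_iff_index_eq set_conv_nth lessThan_def) blast
    then show ?thesis
      using sum.reindex_bij_betw[of "\<lambda>i. S!i" "{..<length S}" "set S" "\<lambda>v. c (idx v) *\<^sub>R v"] d
      by (simp add: idx)
  qed
  then have "(\<Sum>v\<in>set S. c (idx v) *\<^sub>R v) = 0" using h2 by simp
  then have "\<forall>v\<in>set S. c (idx v) = 0"
    using i real_vector.dependent_finite[of "set S"] by auto
  then show "z = 0 \<and> (\<forall>i<length S. c i = 0)"
    using z d idx nth_mem by metis
qed

definition vref :: "nat \<Rightarrow> vec3" where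
  "vref i = (if i = 1 then 0 else if i = 2 then e3 else if i = 3 then e2 else e1)"

definition vtx :: "mat3 \<Rightarrow> vec3 \<Rightarrow> nat \<Rightarrow> vec3" where
  "vtx A b i = A *v vref i + b"

lemma refc_img: "invertible A \<Longrightarrow> refc A b (A *v \<xi> + b) = \<xi>"
  by (simp add: refc_def matrix_vector_mul_assoc inv_props)

lemma lam_vtx:
  assumes "invertible A" "i = 1 \<or> i = 2 \<or> i = 3 \<or> i = 4" "l = 1 \<or> l = 2 \<or> l = 3 \<or> l = 4"
  shows "lam A b l (vtx A b i) = (if l = i then 1 else 0)"
  using assms(2,3) unfolding lam_def vtx_def refc_img[OF assms(1)] Let_def vref_def e1_def e2_def e3_def
  by auto

lemma vtx_in: "i = 1 \<or> i = 2 \<or> i = 3 \<or> i = 4 \<Longrightarrow> vtx A b i \<in> phys_tet A b"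
  unfolding phys_tet_def vtx_def
  by (rule imageI) (auto simp: ref_tet_def vref_def e1_def e2_def e3_def)

lemma vtx_edge:
  assumes "invertible A" "i = 1 \<or> i = 2 \<or> i = 3 \<or> i = 4" "i = fst j' \<or> i = snd j'"
  shows "vtx A b i \<in> edge_set A b j'"
proof -
  have "\<forall>l\<in>{1..4} - {fst j', snd j'}. lam A b l (vtx A b i) = 0"
  proof
    fix l assume l: "l \<in> {1..4} - {fst j', snd j'}"
    then have "l = 1 \<or> l = 2 \<or> l = 3 \<or> l = 4" "l \<noteq> i" using assms(3) by auto
    then show "lam A b l (vtx A b i) = 0" using lam_vtx[OF assms(1,2)] by simp
  qed
  then show ?thesis using vtx_in[OF assms(2)] by (simp add: edge_set_def)
qed

lemma vtx_face:
  assumes "invertible A" "i = 1 \<or> i = 2 \<or> i = 3 \<or> i = 4" "i = fst k' \<or> i = fst (snd k') \<or> i = snd (snd k')"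
  shows "vtx A b i \<in> face_set A b k'"
proof -
  have "\<forall>l\<in>{1..4} - {fst k', fst (snd k'), snd (snd k')}. lam A b l (vtx A b i) = 0"
  proof
    fix l assume l: "l \<in> {1..4} - {fst k', fst (snd k'), snd (snd k')}"
    then have "l = 1 \<or> l = 2 \<or> l = 3 \<or> l = 4" "l \<noteq> i" using assms(3) by auto
    then show "lam A b l (vtx A b i) = 0" using lam_vtx[OF assms(1,2)] by simp
  qed
  then show ?thesis using vtx_in[OF assms(2)] by (simp add: face_set_def)
qed

lemma comb_edge: "j \<in> set edgesJ \<Longrightarrow> i = 1 \<or> i = 2 \<or> i = 3 \<or> i = 4 \<Longrightarrow>
   \<exists>j'\<in>set edgesJ. j' \<noteq> j \<and> (i = fst j' \<or> i = snd j')"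
  unfolding edgesJ_def by (simp, elim disjE, simp_all)

lemma comb_face: "k \<in> set facesK \<Longrightarrow> i = 1 \<or> i = 2 \<or> i = 3 \<or> i = 4 \<Longrightarrow>
   \<exists>k'\<in>set facesK. k' \<noteq> k \<and> (i = fst k' \<or> i = fst (snd k') \<or> i = snd (snd k'))"
  unfolding facesK_def by (simp, elim disjE, simp_all)

definition Lfun where
  "Lfun eb fb cb q = concat (map (E_list eb q) edgesJ) @ concat (map (F_list fb q) facesK) @ C_list cb q"

lemma full_list_eq: "full_list A b eb fb cb q = map (lam A b) [1,2,3,4] @ Lfun eb fb cb q"
  by (simp add: full_list_def Lfun_def)

lemma full_list_1: "full_list A b eb fb cb 1 = map (lam A b) [1,2,3,4]"
  by (simp add: full_list_def E_list_def F_list_def C_list_def)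

lemma vanish:
  assumes P: "polytopal_spaces A b eb fb cb" and A: "invertible A" and q: "q \<ge> 1"
    and phi: "\<phi> \<in> set (Lfun eb fb cb q)" and i: "i = 1 \<or> i = 2 \<or> i = 3 \<or> i = 4"
  shows "\<phi> (vtx A b i) = 0"
proof -
  have P2: "\<forall>j\<in>set edgesJ. \<forall>\<phi>\<in>set (E_list eb q j). \<forall>j'\<in>set edgesJ. j' \<noteq> j \<longrightarrow>
          (\<forall>x\<in>edge_set A b j'. \<phi> x = 0)"
    and P3: "\<forall>k\<in>set facesK. \<forall>\<phi>\<in>set (F_list fb q k). \<forall>k'\<in>set facesK. k' \<noteq> k \<longrightarrow>
          (\<forall>x\<in>face_set A b k'. \<phi> x = 0)"
    and P4: "\<forall>\<phi>\<in>set (C_list cb q). \<forall>x\<in>bdry A b. \<phi> x = 0"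
    using P q unfolding polytopal_spaces_def by blast+
  consider (E) j where "j \<in> set edgesJ" "\<phi> \<in> set (E_list eb q j)"
    | (F) k where "k \<in> set facesK" "\<phi> \<in> set (F_list fb q k)"
    | (C) "\<phi> \<in> set (C_list cb q)"
    using phi unfolding Lfun_def by auto
  then show ?thesis
  proof cases
    case E
    obtain j' where "j' \<in> set edgesJ" "j' \<noteq> j" "i = fst j' \<or> i = snd j'" using comb_edge[OF E(1) i] by blast
    then show ?thesis using P2 E vtx_edge[OF A i] by blast
  next
    case F
    obtain k' where "k' \<in> set facesK" "k' \<noteq> k" "i = fst k' \<or> i = fst (snd k') \<or> i = snd (snd k')"
      using comb_face[OF F(1) i] by blast
    then show ?thesis using P3 F vtx_face[OF A i] by blast
  next
    case C
    have "\<exists>k'\<in>set facesK. i = fst k' \<or> i = fst (snd k') \<or> i = snd (snd k')"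
      using i unfolding facesK_def by (elim disjE) simp_all
    then obtain k' where "k' \<in> set facesK" "i = fst k' \<or> i = fst (snd k') \<or> i = snd (snd k')"
      by blast
    then have "vtx A b i \<in> bdry A b" unfolding bdry_def using vtx_face[OF A i] by blast
    then show ?thesis using P4 C by blast
  qed
qed

definition PLdef where
  "PLdef A eb fb cb S p = concat (map (\<lambda>j. map (\<lambda>\<phi>. (\<phi>, EM A j)) (E_list eb p j)) edgesJ)
     @ concat (map (\<lambda>k. map (\<lambda>\<phi>. (\<phi>, FM A k)) (F_list fb p k)) facesK)
     @ map (\<lambda>\<phi>. (\<phi>, S)) (C_list cb p)"

lemma mc_cons: "mset (concat (map (\<lambda>\<phi>. f \<phi> # g \<phi>) L)) = mset (map f L) + mset (concat (map g L))"
  by (induction L) (simp_all add: ac_simps)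

lemma mc_nil: "concat (map (\<lambda>\<phi>. []) L) = []"
  by (induction L) simp_all

lemma mset_family:
  "mset (whole_family A B1 eb fb cb S p) =
   mset (B1 @ concat (map (\<lambda>(\<phi>,Ms). map (sm \<phi>) Ms) (PLdef A eb fb cb S p)) @ map (\<lambda>\<psi>. sm \<psi> (mat 1)) (Lfun eb fb cb (p+1)))"
  by (simp add: whole_family_def edge_funs_def edge_face_funs_def face_funs_def cell_funs_def Let_def
     edgesJ_def facesK_def EM_def FM_def Lfun_def PLdef_def map_concat o_def mc_cons mc_nil)

lemma nth_1234: "i < 4 \<Longrightarrow> [1,2,3,4::nat] ! i = Suc i"
proof -
  assume "i < 4"
  then have "i = 0 \<or> i = 1 \<or> i = 2 \<or> i = 3" by arith
  then show ?thesis by (elim disjE) simp_all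
qed

theorem mainTheorem3:
  fixes A :: "real^3^3" and b :: "real^3" and p :: nat
    and eb :: "nat \<Rightarrow> nat \<times> nat \<Rightarrow> nat \<Rightarrow> real^3 \<Rightarrow> real"
    and fb :: "nat \<Rightarrow> nat \<times> nat \<times> nat \<Rightarrow> nat \<Rightarrow> real^3 \<Rightarrow> real"
    and cb :: "nat \<Rightarrow> nat \<Rightarrow> real^3 \<Rightarrow> real"
    and B1 :: "(real^3 \<Rightarrow> real^3^3) list" and S :: "(real^3^3) list"
  assumes "invertible A"
    and "p \<ge> 2"
    and "polytopal_spaces A b eb fb cb"
    and "basis_on (phys_tet A b) B1 MatPoly1"
    and "distinct S" and "independent (set S)" and "span (set S) = sl3"
  shows "lin_indep_on (phys_tet A b) (whole_family A B1 eb fb cb S p)"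
proof -
  note A = assms(1) and P = assms(3)
  define X where "X = phys_tet A b"
  define lamL where "lamL = map (lam A b) [1,2,3,4]"
  define PL where "PL = PLdef A eb fb cb S p"
  have p1: "p \<ge> 1" using assms(2) by simp
  have fstPL: "map fst PL = Lfun eb fb cb p"
    by (simp add: PL_def PLdef_def Lfun_def map_concat o_def)
  have basis: "q \<ge> 1 \<Longrightarrow> basis_on X (lamL @ Lfun eb fb cb q) (Poly3 q)" for q
    using P unfolding polytopal_spaces_def X_def lamL_def full_list_eq by blast
  have R: "lin_indep_on X (B1 @ concat (map (\<lambda>(\<phi>,Ms). map (sm \<phi>) Ms) PL) @ map (\<lambda>\<psi>. sm \<psi> (mat 1)) (Lfun eb fb cb (p+1)))"
  proof (rule abstract_main)
    show "lin_indep_on X (lamL @ map fst PL)" using basis[OF p1] by (simp add: fstPL basis_on_def)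
    show "spans_on X (lamL @ map fst PL) (Poly3 p)" using basis[OF p1] by (simp add: fstPL basis_on_def)
    show "\<forall>\<phi>\<in>set (map fst PL). \<phi> \<in> Poly3 p" using basis[OF p1] by (auto simp: fstPL basis_on_def)
    show "lin_indep_on X (Lfun eb fb cb (p+1))"
      using basis[of "p+1"] lin_indep_suffix by (auto simp: basis_on_def)
    show "spans_on X lamL (Poly3 1)"
    proof -
      have "basis_on X (full_list A b eb fb cb 1) (Poly3 1)"
        using P unfolding polytopal_spaces_def X_def by blast
      then show ?thesis unfolding full_list_1 basis_on_def lamL_def by blast
    qed
    show "1 \<le> p" by (rule p1)
    show "basis_on X B1 MatPoly1" using assms(4) by (simp add: X_def)
    show "\<forall>k<length lamL. \<exists>v\<in>X. (\<forall>i<length lamL. (lamL!i) v = (if i = k then 1 else 0))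
      \<and> (\<forall>\<phi>\<in>set (map fst PL). \<phi> v = 0) \<and> (\<forall>\<psi>\<in>set (Lfun eb fb cb (p+1)). \<psi> v = 0)"
    proof (intro allI impI)
      fix k assume "k < length lamL"
      then have k4: "k < 4" by (simp add: lamL_def)
      then have kk: "Suc k = 1 \<or> Suc k = 2 \<or> Suc k = 3 \<or> Suc k = 4" by arith
      have "vtx A b (Suc k) \<in> X" using vtx_in[OF kk] by (simp add: X_def)
      moreover have "\<forall>i<length lamL. (lamL!i) (vtx A b (Suc k)) = (if i = k then 1 else 0)"
      proof (intro allI impI)
        fix i assume "i < length lamL"
        then have i4: "i < 4" by (simp add: lamL_def)
        then have ii: "Suc i = 1 \<or> Suc i = 2 \<or> Suc i = 3 \<or> Suc i = 4" by arith
        show "(lamL!i) (vtx A b (Suc k)) = (if i = k then 1 else 0)"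
        proof -
          have "lamL ! i = lam A b (Suc i)"
            using i4 nth_1234[OF i4] unfolding lamL_def by (subst nth_map) simp_all
          then show ?thesis using lam_vtx[OF A kk ii] by simp
        qed
      qed
      moreover have "\<forall>\<phi>\<in>set (map fst PL). \<phi> (vtx A b (Suc k)) = 0"
        using vanish[OF P A p1 _ kk] by (simp add: fstPL)
      moreover have "\<forall>\<psi>\<in>set (Lfun eb fb cb (p+1)). \<psi> (vtx A b (Suc k)) = 0"
        using vanish[OF P A _ _ kk, of "p+1"] by simp
      ultimately show "\<exists>v\<in>X. (\<forall>i<length lamL. (lamL!i) v = (if i = k then 1 else 0))
        \<and> (\<forall>\<phi>\<in>set (map fst PL). \<phi> v = 0) \<and> (\<forall>\<psi>\<in>set (Lfun eb fb cb (p+1)). \<psi> v = 0)" by blast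
    qed
    have "\<forall>x\<in>set PL. mats_indep (snd x)"
      using EM_indep[OF A] FM_indep[OF A] S_mats[OF assms(5-7)] by (auto simp: PL_def PLdef_def)
    then show "\<forall>a<length PL. mats_indep (snd (PL!a))" by simp
  qed
  show ?thesis
    using lin_indep_perm[OF mset_family R[unfolded PL_def X_def]] by (simp add: X_def)
qed

end
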